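(* In the two-door cascading memoryless semi-fractional setting, there is an optimal semi-fractional sequence $\pi$, that is, $\mathbb{E}[\pi]\le\mathbb{E}[\pi']$ for every semi-fractional sequence $\pi'$.
   Context: Two cascading memoryless doors with durations: parameters $p_1,p_2\in(0,1)$, $q_1=1-p_1$, $q_2=1-p_2$, and $c>0$. Both doors start closed. A semi-fractional sequence is an infinite alternating sequence of knocks $1^{t_1}\,2\,1^{t_2}\,2\cdots$ with real $t_j\ge0$. A 1-knock $1^t$ takes $t$ time units and, if door 1 is closed, opens it with probability $1-q_1^t$, independently of everything else. A 2-knock takes $c$ time units and opens door 2 with probability $p_2$ (independently) if door 1 is open at that time, and with probability $0$ otherwise. There is no feedback. The running time is the time at which both doors are open, and $\mathbb{E}[\pi]$ is its expectation for sequence $\pi$. *)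

theory Defs
  imports "HOL-Probability.Probability"
begin

text \<open>Semi-fractional sequence 1^{t 0} 2 1^{t 1} 2 ...  (indices from 0), with t j \<ge> 0.
  Outcome space: for each j a pair of coins.  The first coin says whether the j-th
  1-knock (duration t j) would open door 1 if it is closed (probability 1 - q1 powr t j),
  the second whether the j-th 2-knock would open door 2 if door 1 is open (probability p2).\<close>

definition knock_space :: "real \<Rightarrow> real \<Rightarrow> (nat \<Rightarrow> real) \<Rightarrow> (nat \<Rightarrow> bool \<times> bool) measure" where
  "knock_space p1 p2 t =
     PiM UNIV (\<lambda>j::nat. measure_pmf
        (pair_pmf (bernoulli_pmf (1 - (1 - p1) powr t j)) (bernoulli_pmf p2)))"

definition door1_open :: "(nat \<Rightarrow> bool \<times> bool) \<Rightarrow> nat \<Rightarrow> bool" where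
  "door1_open \<omega> j = (\<exists>i\<le>j. fst (\<omega> i))"

definition door2_opens :: "(nat \<Rightarrow> bool \<times> bool) \<Rightarrow> nat \<Rightarrow> bool" where
  "door2_opens \<omega> j = (door1_open \<omega> j \<and> snd (\<omega> j))"

definition run_time :: "(nat \<Rightarrow> real) \<Rightarrow> real \<Rightarrow> (nat \<Rightarrow> bool \<times> bool) \<Rightarrow> ennreal" where
  "run_time t c \<omega> =
     (if \<exists>j. door2_opens \<omega> j
      then (let N = (LEAST j. door2_opens \<omega> j)
            in ennreal ((\<Sum>i\<le>N. t i) + real (Suc N) * c))
      else \<infinity>)"

definition expected_time :: "real \<Rightarrow> real \<Rightarrow> real \<Rightarrow> (nat \<Rightarrow> real) \<Rightarrow> ennreal" where
  "expected_time p1 p2 c t = (\<integral>\<^sup>+ \<omega>. run_time t c \<omega> \<partial>(knock_space p1 p2 t))"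

definition semi_fractional :: "(nat \<Rightarrow> real) \<Rightarrow> bool" where
  "semi_fractional t = (\<forall>j. 0 \<le> t j)"

end

theory Submission imports Defs begin

lemma emb_iff: "\<omega> \<in> prod_emb UNIV (\<lambda>i. measure_pmf (f i)) {..<(j::nat)} (PiE {..<j} (\<lambda>i. {x i})) \<longleftrightarrow> (\<forall>i<j. \<omega> i = x i)"
  by (simp add: prod_emb_iff space_PiM PiE_iff lessThan_iff Ball_def)

lemma cyl:
  fixes f :: "nat \<Rightarrow> (bool \<times> bool) pmf"
  shows "{\<omega>. \<forall>i<j. \<omega> i = x i} \<in> sets (PiM UNIV (\<lambda>i. measure_pmf (f i)))"
    and "emeasure (PiM UNIV (\<lambda>i. measure_pmf (f i))) {\<omega>. \<forall>i<j. \<omega> i = x i}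
          = ennreal (\<Prod>i<j. pmf (f i) (x i))"
proof -
  interpret M': prob_space "measure_pmf (f i)" for i by (rule prob_space_measure_pmf)
  interpret product_prob_space "\<lambda>i. measure_pmf (f i)" UNIV by unfold_locales
  have eq: "{\<omega>. \<forall>i<j. \<omega> i = x i} = prod_emb UNIV (\<lambda>i. measure_pmf (f i)) {..<j} (PiE {..<j} (\<lambda>i. {x i}))"
    using emb_iff by blast
  show "{\<omega>. \<forall>i<j. \<omega> i = x i} \<in> sets (PiM UNIV (\<lambda>i. measure_pmf (f i)))"
    unfolding eq by (intro measurable_prod_emb sets_PiM_I_finite) auto
  have "emeasure (PiM UNIV (\<lambda>i. measure_pmf (f i))) {\<omega>. \<forall>i<j. \<omega> i = x i}
      = (\<Prod>i<j. emeasure (measure_pmf (f i)) {x i})"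
    unfolding eq by (rule emeasure_PiM_emb) auto
  also have "\<dots> = (\<Prod>i<j. ennreal (pmf (f i) (x i)))"
    by (simp add: emeasure_pmf_single)
  also have "\<dots> = ennreal (\<Prod>i<j. pmf (f i) (x i))"
    by (simp add: prod_ennreal)
  finally show "emeasure (PiM UNIV (\<lambda>i. measure_pmf (f i))) {\<omega>. \<forall>i<j. \<omega> i = x i}
          = ennreal (\<Prod>i<j. pmf (f i) (x i))" .
qed

lemma cylQ:
  fixes f :: "nat \<Rightarrow> (bool \<times> bool) pmf"
  shows "{\<omega>. Q (restrict \<omega> {..<j})} \<in> sets (PiM UNIV (\<lambda>i. measure_pmf (f i)))"
    and "emeasure (PiM UNIV (\<lambda>i. measure_pmf (f i))) {\<omega>. Q (restrict \<omega> {..<j})}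
          = ennreal (\<Sum>x\<in>{x\<in>PiE {..<j} (\<lambda>_. UNIV). Q x}. \<Prod>i<j. pmf (f i) (x i))"
proof -
  let ?C = "{x\<in>PiE {..<j} (\<lambda>_. UNIV). Q x}"
  let ?E = "\<lambda>x. {\<omega>. \<forall>i<j. \<omega> i = x i}"
  let ?M = "PiM UNIV (\<lambda>i. measure_pmf (f i))"
  have eq: "{\<omega>. Q (restrict \<omega> {..<j})} = (\<Union>x\<in>?C. ?E x)"
  proof (intro set_eqI iffI)
    fix \<omega> assume "\<omega> \<in> {\<omega>. Q (restrict \<omega> {..<j})}"
    then have "restrict \<omega> {..<j} \<in> ?C" by (simp add: restrict_PiE_iff)
    moreover have "\<omega> \<in> ?E (restrict \<omega> {..<j})" by simp
    ultimately show "\<omega> \<in> (\<Union>x\<in>?C. ?E x)" by blast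
  next
    fix \<omega> assume "\<omega> \<in> (\<Union>x\<in>?C. ?E x)"
    then obtain x where x: "x \<in> ?C" "\<forall>i<j. \<omega> i = x i" by auto
    have "restrict \<omega> {..<j} = x"
    proof (rule extensionalityI[of _ "{..<j}"])
      show "restrict \<omega> {..<j} \<in> extensional {..<j}" by (rule restrict_extensional)
      show "x \<in> extensional {..<j}" using x(1) by (simp add: PiE_def)
      fix i assume "i \<in> {..<j}" then show "restrict \<omega> {..<j} i = x i" using x(2) by simp
    qed
    then show "\<omega> \<in> {\<omega>. Q (restrict \<omega> {..<j})}" using x(1) by simp
  qed
  have fin: "finite ?C" by (rule finite_subset[OF _ finite_PiE[of "{..<j}" "\<lambda>_. UNIV"]]) auto
  have disj: "disjoint_family_on ?E ?C"
    unfolding disjoint_family_on_def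
  proof (intro ballI impI)
    fix x y assume "x \<in> ?C" "y \<in> ?C" "x \<noteq> y"
    then obtain i where "i < j" "x i \<noteq> y i"
      by (metis (no_types, lifting) PiE_ext lessThan_iff mem_Collect_eq)
    then show "?E x \<inter> ?E y = {}" by auto
  qed
  show "{\<omega>. Q (restrict \<omega> {..<j})} \<in> sets ?M"
    unfolding eq using fin by (intro sets.finite_UN ballI cyl(1))
  have "emeasure ?M (\<Union>x\<in>?C. ?E x) = (\<Sum>x\<in>?C. emeasure ?M (?E x))"
    using fin disj by (intro sum_emeasure[symmetric] image_subsetI cyl(1))
  also have "\<dots> = (\<Sum>x\<in>?C. ennreal (\<Prod>i<j. pmf (f i) (x i)))"
    by (simp add: cyl(2))
  also have "\<dots> = ennreal (\<Sum>x\<in>?C. \<Prod>i<j. pmf (f i) (x i))"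
    by (rule sum_ennreal) (simp add: prod_nonneg)
  finally show "emeasure ?M {\<omega>. Q (restrict \<omega> {..<j})} = ennreal (\<Sum>x\<in>?C. \<Prod>i<j. pmf (f i) (x i))"
    unfolding eq .
qed


definition wt :: "real \<Rightarrow> real \<Rightarrow> real \<Rightarrow> bool \<times> bool \<Rightarrow> real" where
  "wt p1 p2 s x = (if fst x then 1 - (1-p1) powr s else (1-p1) powr s) * (if snd x then p2 else 1 - p2)"

definition Rj :: "real \<Rightarrow> real \<Rightarrow> (nat \<Rightarrow> real) \<Rightarrow> nat \<Rightarrow> real" where
  "Rj p1 p2 t j = (\<Sum>x\<in>{x\<in>PiE {..<j} (\<lambda>_. UNIV). \<forall>k<j. \<not> door2_opens x k}. \<Prod>i<j. wt p1 p2 (t i) (x i))"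

lemma pmf_eq:
  assumes "0 < p1" "p1 < 1" "0 \<le> p2" "p2 \<le> 1" "0 \<le> s"
  shows "pmf (pair_pmf (bernoulli_pmf (1 - (1-p1) powr s)) (bernoulli_pmf p2)) x = wt p1 p2 s x"
proof -
  have a: "0 \<le> (1-p1) powr s" by simp
  have b: "(1-p1) powr s \<le> 1" using assms by (intro powr_le1) auto
  obtain u v where x: "x = (u, v)" by (cases x)
  show ?thesis using a b assms unfolding x
    by (cases u; cases v) (simp_all add: pmf_pair wt_def)
qed

lemma door2_restrict:
  assumes "k < j" shows "door2_opens (restrict \<omega> {..<j}) k = door2_opens \<omega> k"
proof -
  have e: "restrict \<omega> {..<j} i = \<omega> i" if "i \<le> k" for i
    using that assms by simp
  have 1: "(\<exists>i\<le>k. fst (restrict \<omega> {..<j} i)) = (\<exists>i\<le>k. fst (\<omega> i))"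
  proof
    assume "\<exists>i\<le>k. fst (restrict \<omega> {..<j} i)"
    then obtain i where i: "i \<le> k" "fst (restrict \<omega> {..<j} i)" by blast
    then have "fst (\<omega> i)" using e[OF i(1)] by simp
    then show "\<exists>i\<le>k. fst (\<omega> i)" using i(1) by blast
  next
    assume "\<exists>i\<le>k. fst (\<omega> i)"
    then obtain i where i: "i \<le> k" "fst (\<omega> i)" by blast
    then have "fst (restrict \<omega> {..<j} i)" using e[OF i(1)] by simp
    then show "\<exists>i\<le>k. fst (restrict \<omega> {..<j} i)" using i(1) by blast
  qed
  show ?thesis unfolding door2_opens_def door1_open_def 1 using e[of k] by simp
qed

lemma Aset_eq: "{\<omega>. \<forall>k<j. \<not> door2_opens \<omega> k} = {\<omega>. (\<lambda>x. \<forall>k<j. \<not> door2_opens x k) (restrict \<omega> {..<j})}"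
  using door2_restrict by auto

lemma emeasure_A:
  assumes "0 < p1" "p1 < 1" "0 \<le> p2" "p2 \<le> 1" "semi_fractional t"
  shows "{\<omega>. \<forall>k<j. \<not> door2_opens \<omega> k} \<in> sets (knock_space p1 p2 t)"
    and "emeasure (knock_space p1 p2 t) {\<omega>. \<forall>k<j. \<not> door2_opens \<omega> k} = ennreal (Rj p1 p2 t j)"
proof -
  show "{\<omega>. \<forall>k<j. \<not> door2_opens \<omega> k} \<in> sets (knock_space p1 p2 t)"
    unfolding knock_space_def Aset_eq by (rule cylQ(1))
  have "emeasure (knock_space p1 p2 t) {\<omega>. \<forall>k<j. \<not> door2_opens \<omega> k}
     = ennreal (\<Sum>x\<in>{x\<in>PiE {..<j} (\<lambda>_. UNIV). \<forall>k<j. \<not> door2_opens x k}.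
          \<Prod>i<j. pmf (pair_pmf (bernoulli_pmf (1 - (1-p1) powr t i)) (bernoulli_pmf p2)) (x i))"
    unfolding knock_space_def Aset_eq by (rule cylQ(2))
  also have "\<dots> = ennreal (Rj p1 p2 t j)"
    unfolding Rj_def using assms by (simp add: pmf_eq semi_fractional_def)
  finally show "emeasure (knock_space p1 p2 t) {\<omega>. \<forall>k<j. \<not> door2_opens \<omega> k} = ennreal (Rj p1 p2 t j)" .
qed

lemma run_time_eq:
  assumes "semi_fractional t" "0 < c"
  shows "run_time t c \<omega> = (\<Sum>j. ennreal (t j + c) * indicator {\<omega>. \<forall>k<j. \<not> door2_opens \<omega> k} \<omega>)"
proof (cases "\<exists>j. door2_opens \<omega> j")
  case True
  define N where "N = (LEAST j. door2_opens \<omega> j)"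
  have dN: "door2_opens \<omega> N" unfolding N_def using True by (metis LeastI)
  have ind: "indicator {\<omega>. \<forall>k<j. \<not> door2_opens \<omega> k} \<omega> = (if j \<le> N then 1 else (0::ennreal))" for j
  proof (cases "j \<le> N")
    case True
    have "\<not> door2_opens \<omega> k" if "k < j" for k
    proof -
      have "k < N" using that True by simp
      then show ?thesis unfolding N_def by (rule not_less_Least)
    qed
    then have "\<forall>k<j. \<not> door2_opens \<omega> k" by blast
    then show ?thesis using True by simp
  next
    case False
    then show ?thesis using dN by (auto simp: indicator_def not_le)
  qed
  have "(\<Sum>j. ennreal (t j + c) * indicator {\<omega>. \<forall>k<j. \<not> door2_opens \<omega> k} \<omega>)
      = (\<Sum>j\<in>{..N}. ennreal (t j + c) * indicator {\<omega>. \<forall>k<j. \<not> door2_opens \<omega> k} \<omega>)"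
    by (rule suminf_finite) (auto simp: ind)
  also have "\<dots> = (\<Sum>j\<in>{..N}. ennreal (t j + c))" by (simp add: ind)
  also have "\<dots> = ennreal (\<Sum>j\<in>{..N}. t j + c)"
    using assms by (intro sum_ennreal) (auto simp: semi_fractional_def add_nonneg_nonneg less_imp_le)
  also have "(\<Sum>j\<in>{..N}. t j + c) = (\<Sum>i\<le>N. t i) + real (Suc N) * c"
    by (simp add: sum.distrib)
  finally show ?thesis using True unfolding run_time_def N_def[symmetric] by simp
next
  case False
  have ind: "indicator {\<omega>. \<forall>k<j. \<not> door2_opens \<omega> k} \<omega> = (1::ennreal)" for j
    using False by simp
  have ns: "\<not> summable (\<lambda>j. t j + c)"
  proof
    assume "summable (\<lambda>j. t j + c)"
    then have "(\<lambda>j. t j + c) \<longlonglongrightarrow> 0" by (rule summable_LIMSEQ_zero)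
    moreover have "\<exists>N. \<forall>n\<ge>N. c \<le> t n + c" using assms by (auto simp: semi_fractional_def)
    ultimately have "c \<le> 0" by (rule LIMSEQ_le_const)
    then show False using assms by simp
  qed
  have sumtop: "(\<Sum>j. ennreal (t j + c)) = \<top>"
    using assms ns by (intro summable_iff_suminf_neq_top) (auto simp: semi_fractional_def add_nonneg_nonneg less_imp_le)
  have "run_time t c \<omega> = \<top>" unfolding run_time_def infinity_ennreal_def by (rule if_not_P) (rule False)
  also have "\<dots> = (\<Sum>j. ennreal (t j + c))" using sumtop by (rule sym)
  also have "\<dots> = (\<Sum>j. ennreal (t j + c) * indicator {\<omega>. \<forall>k<j. \<not> door2_opens \<omega> k} \<omega>)"
    by (simp only: ind mult_1_right)
  finally show ?thesis .
qed

lemma expected_eq: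
  assumes "0 < p1" "p1 < 1" "0 \<le> p2" "p2 \<le> 1" "0 < c" "semi_fractional t"
  shows "expected_time p1 p2 c t = (\<Sum>j. ennreal ((t j + c) * Rj p1 p2 t j))"
proof -
  have "expected_time p1 p2 c t = (\<integral>\<^sup>+ \<omega>. (\<Sum>j. ennreal (t j + c) * indicator {\<omega>. \<forall>k<j. \<not> door2_opens \<omega> k} \<omega>) \<partial>(knock_space p1 p2 t))"
  proof -
    have rt: "run_time t c = (\<lambda>\<omega>. (\<Sum>j. ennreal (t j + c) * indicator {\<omega>. \<forall>k<j. \<not> door2_opens \<omega> k} \<omega>))"
      by (rule ext) (rule run_time_eq[OF assms(6,5)])
    show ?thesis unfolding expected_time_def rt by (rule refl)
  qed
  also have "\<dots> = (\<Sum>j. \<integral>\<^sup>+ \<omega>. ennreal (t j + c) * indicator {\<omega>. \<forall>k<j. \<not> door2_opens \<omega> k} \<omega> \<partial>(knock_space p1 p2 t))"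
    using emeasure_A(1)[OF assms(1-4,6)] by (intro nn_integral_suminf) simp
  also have "\<dots> = (\<Sum>j. ennreal (t j + c) * ennreal (Rj p1 p2 t j))"
    using emeasure_A[OF assms(1-4,6)] by (simp add: nn_integral_cmult_indicator)
  also have "\<dots> = (\<Sum>j. ennreal ((t j + c) * Rj p1 p2 t j))"
    using assms by (simp add: ennreal_mult' semi_fractional_def add_nonneg_nonneg less_imp_le)
  finally show ?thesis .
qed


lemma wt_nonneg:
  assumes "0 < p1" "p1 < 1" "0 \<le> p2" "p2 \<le> 1" "0 \<le> s"
  shows "0 \<le> wt p1 p2 s x"
proof -
  have b: "(1-p1) powr s \<le> 1" using assms by (intro powr_le1) auto
  show ?thesis using b assms unfolding wt_def by (intro mult_nonneg_nonneg) auto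
qed

lemma Rj_nonneg:
  assumes "0 < p1" "p1 < 1" "0 \<le> p2" "p2 \<le> 1" "semi_fractional t"
  shows "0 \<le> Rj p1 p2 t j"
  unfolding Rj_def using assms
  by (intro sum_nonneg prod_nonneg wt_nonneg) (auto simp: semi_fractional_def)

lemma Bset_emb:
  fixes f :: "nat \<Rightarrow> (bool \<times> bool) pmf"
  shows "{\<omega>. \<forall>i<j. snd (\<omega> i) = False} =
   prod_emb UNIV (\<lambda>i. measure_pmf (f i)) {..<(j::nat)} (PiE {..<j} (\<lambda>i. UNIV \<times> {False}))"
proof (intro set_eqI)
  fix \<omega> :: "nat \<Rightarrow> bool \<times> bool"
  have "\<omega> \<in> prod_emb UNIV (\<lambda>i. measure_pmf (f i)) {..<(j::nat)} (PiE {..<j} (\<lambda>i. UNIV \<times> {False}))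
     \<longleftrightarrow> (\<forall>i<j. \<omega> i \<in> UNIV \<times> {False})"
    by (simp add: prod_emb_iff space_PiM PiE_iff lessThan_iff Ball_def)
  also have "\<dots> \<longleftrightarrow> (\<forall>i<j. snd (\<omega> i) = False)"
    by (simp add: mem_Times_iff)
  finally show "\<omega> \<in> {\<omega>. \<forall>i<j. snd (\<omega> i) = False} \<longleftrightarrow>
     \<omega> \<in> prod_emb UNIV (\<lambda>i. measure_pmf (f i)) {..<(j::nat)} (PiE {..<j} (\<lambda>i. UNIV \<times> {False}))"
    by simp
qed

lemma Bset_emeasure:
  fixes f :: "nat \<Rightarrow> (bool \<times> bool) pmf"
  shows "emeasure (PiM UNIV (\<lambda>i. measure_pmf (f i))) {\<omega>. \<forall>i<j. snd (\<omega> i) = False}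
      = (\<Prod>i<j. emeasure (measure_pmf (f i)) (UNIV \<times> {False}))"
proof -
  interpret M': prob_space "measure_pmf (f i)" for i by (rule prob_space_measure_pmf)
  interpret product_prob_space "\<lambda>i. measure_pmf (f i)" UNIV by unfold_locales
  have eq: "{\<omega>. \<forall>i<j. snd (\<omega> i) = False} = prod_emb UNIV (\<lambda>i. measure_pmf (f i)) {..<j} (PiE {..<j} (\<lambda>i. UNIV \<times> {False}))"
    by (rule Bset_emb)
  show ?thesis by (subst eq, rule emeasure_PiM_emb[OF subset_UNIV finite_lessThan, where X="\<lambda>i. UNIV \<times> {False}"]) (simp only: sets_measure_pmf UNIV_I)
qed

lemma single_emeasure:
  fixes A :: "bool pmf" and p2 :: real
  assumes "0 \<le> p2" "p2 \<le> 1"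
  shows "emeasure (measure_pmf (pair_pmf A (bernoulli_pmf p2))) (UNIV \<times> {False}) = ennreal (1 - p2)"
proof -
  have e: "(UNIV :: bool set) \<times> {False} = snd -` {False}" by (simp add: set_eq_iff mem_Times_iff)
  have "emeasure (measure_pmf (pair_pmf A (bernoulli_pmf p2))) (snd -` {False})
      = emeasure (measure_pmf (map_pmf snd (pair_pmf A (bernoulli_pmf p2)))) {False}"
    by (rule emeasure_map_pmf[symmetric])
  also have "\<dots> = emeasure (measure_pmf (bernoulli_pmf p2)) {False}"
    unfolding map_snd_pair_pmf ..
  also have "\<dots> = ennreal (1 - p2)"
    using assms by (simp add: emeasure_pmf_single)
  finally show ?thesis unfolding e .
qed

lemma Rj_lower:
  assumes "0 < p1" "p1 < 1" "0 \<le> p2" "p2 \<le> 1" "semi_fractional t"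
  shows "(1 - p2) ^ j \<le> Rj p1 p2 t j"
proof -
  have "emeasure (knock_space p1 p2 t) {\<omega>. \<forall>i<j. snd (\<omega> i) = False}
      = (\<Prod>i<j. ennreal (1 - p2))"
    unfolding knock_space_def Bset_emeasure single_emeasure[OF assms(3,4)] ..
  also have "\<dots> = ennreal ((1 - p2) ^ j)"
    using assms by (simp add: ennreal_power)
  finally have eB: "emeasure (knock_space p1 p2 t) {\<omega>. \<forall>i<j. snd (\<omega> i) = False} = ennreal ((1 - p2) ^ j)" .
  have sub: "{\<omega>. \<forall>i<j. snd (\<omega> i) = False} \<subseteq> {\<omega>. \<forall>k<j. \<not> door2_opens \<omega> k}"
    unfolding door2_opens_def by blast
  have "ennreal ((1 - p2) ^ j) \<le> ennreal (Rj p1 p2 t j)"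
    unfolding eB[symmetric] emeasure_A(2)[OF assms, symmetric]
    by (rule emeasure_mono[OF sub emeasure_A(1)[OF assms]])
  then show ?thesis using Rj_nonneg[OF assms] by (simp add: ennreal_le_iff)
qed

lemma Rj_tendsto:
  assumes "p1 < 1" and lim: "\<And>i. (\<lambda>n. T n i) \<longlonglongrightarrow> t i"
  shows "(\<lambda>n. Rj p1 p2 (T n) j) \<longlonglongrightarrow> Rj p1 p2 t j"
proof -
  have w: "(\<lambda>n. wt p1 p2 (T n i) x) \<longlonglongrightarrow> wt p1 p2 (t i) x" for i x
  proof -
    have "(\<lambda>n. (1-p1) powr (T n i)) \<longlonglongrightarrow> (1-p1) powr (t i)"
      using assms by (intro tendsto_powr tendsto_const lim) auto
    then show ?thesis unfolding wt_def
      by (intro tendsto_mult tendsto_const) (cases "fst x"; simp add: tendsto_diff tendsto_const)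
  qed
  show ?thesis unfolding Rj_def
    by (intro tendsto_sum tendsto_prod w)
qed


theorem mainTheorem16:
  fixes p1 p2 c :: real
  assumes "0 < p1" "p1 < 1" "0 < p2" "p2 < 1" "0 < c"
  shows "\<exists>t. semi_fractional t \<and>
           (\<forall>t'. semi_fractional t' \<longrightarrow> expected_time p1 p2 c t \<le> expected_time p1 p2 c t')"
proof -
  define m where "m = (INF t\<in>{t. semi_fractional t}. expected_time p1 p2 c t)"
  have p2: "0 \<le> p2" "p2 \<le> 1" using assms by auto
  have mle: "m \<le> expected_time p1 p2 c t'" if "semi_fractional t'" for t'
    unfolding m_def by (rule INF_lower) (simp add: that)
  show ?thesis
  proof (cases "m = \<top>")
    case True
    have "semi_fractional (\<lambda>_. 0)" by (simp add: semi_fractional_def)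
    moreover have "\<forall>t'. semi_fractional t' \<longrightarrow> expected_time p1 p2 c (\<lambda>_. 0) \<le> expected_time p1 p2 c t'"
    proof (intro allI impI)
      fix t' assume "semi_fractional t'"
      then have "expected_time p1 p2 c t' = \<top>" using mle True by (metis top_unique)
      then show "expected_time p1 p2 c (\<lambda>_. 0) \<le> expected_time p1 p2 c t'" by simp
    qed
    ultimately show ?thesis by blast
  next
    case False
    define M0 where "M0 = enn2real m"
    have mM0: "m = ennreal M0" using False unfolding M0_def by (simp add: ennreal_enn2real_if)
    have M0nn: "0 \<le> M0" by (simp add: M0_def)
    have hnn: "0 \<le> (t j + c) * Rj p1 p2 t j" if "semi_fractional t" for t j
      using that assms Rj_nonneg[OF assms(1,2) p2 that, of j]
      by (intro mult_nonneg_nonneg) (auto simp: semi_fractional_def)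
    have approx: "\<exists>t. semi_fractional t \<and> expected_time p1 p2 c t < ennreal (M0 + inverse (real (Suc n)))" for n
    proof -
      have "m < ennreal (M0 + inverse (real (Suc n)))" unfolding mM0 using M0nn
        by (subst ennreal_less_iff) auto
      then have "(INF t\<in>{t. semi_fractional t}. expected_time p1 p2 c t) < ennreal (M0 + inverse (real (Suc n)))"
        by (simp only: m_def)
      then show ?thesis by (auto simp: INF_less_iff)
    qed
    have "\<forall>n. \<exists>t. semi_fractional t \<and> expected_time p1 p2 c t < ennreal (M0 + inverse (real (Suc n)))"
      using approx by blast
    then obtain T where T0: "\<forall>n. semi_fractional (T n) \<and> expected_time p1 p2 c (T n) < ennreal (M0 + inverse (real (Suc n)))"
      by (rule choice[THEN exE]) blast
    have T1: "semi_fractional (T n)" for n using T0 by blast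
    have T2: "expected_time p1 p2 c (T n) < ennreal (M0 + inverse (real (Suc n)))" for n using T0 by blast
    have part: "(\<Sum>j<K. (T n j + c) * Rj p1 p2 (T n) j) \<le> M0 + inverse (real (Suc n))" for n K
    proof -
      define f where "f j = (T n j + c) * Rj p1 p2 (T n) j" for j
      have nn: "0 \<le> f j" for j unfolding f_def using hnn T1 by blast
      have eq: "expected_time p1 p2 c (T n) = (\<Sum>j. ennreal (f j))"
        unfolding f_def by (rule expected_eq[OF assms(1,2) p2 assms(5) T1])
      have nt: "(\<Sum>j. ennreal (f j)) \<noteq> \<top>" using T2[of n] unfolding eq by auto
      have sm: "summable f" by (rule summable_suminf_not_top[OF nn nt])
      have "(\<Sum>j. ennreal (f j)) = ennreal (suminf f)" by (rule suminf_ennreal2[OF nn sm])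
      then have "ennreal (suminf f) < ennreal (M0 + inverse (real (Suc n)))" using T2[of n] unfolding eq by simp
      then have "suminf f < M0 + inverse (real (Suc n))"
        using suminf_nonneg[OF sm nn] by (simp add: ennreal_less_iff)
      moreover have "sum f {..<K} \<le> suminf f" using sm nn by (intro sum_le_suminf) auto
      ultimately show ?thesis unfolding f_def by linarith
    qed
    define Bd where "Bd j = (M0 + 1) / (1 - p2) ^ j" for j
    have Tb: "T n j \<in> {0..Bd j}" for n j
    proof -
      have pos: "0 < (1 - p2) ^ j" using assms by simp
      have "T n j * (1 - p2) ^ j \<le> (T n j + c) * Rj p1 p2 (T n) j"
        using T1[of n] Rj_lower[OF assms(1,2) p2 T1[of n], of j] assms pos
        by (intro mult_mono) (auto simp: semi_fractional_def)
      also have "\<dots> \<le> (\<Sum>i<Suc j. (T n i + c) * Rj p1 p2 (T n) i)"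
        by (rule member_le_sum) (use hnn T1 in auto)
      also have "\<dots> \<le> M0 + inverse (real (Suc n))" by (rule part)
      also have "\<dots> \<le> M0 + 1" by (simp add: inverse_le_1_iff)
      finally have "T n j * (1 - p2) ^ j \<le> M0 + 1" .
      then have "T n j \<le> Bd j" unfolding Bd_def using pos by (simp add: pos_le_divide_eq)
      then show ?thesis using T1[of n] by (simp add: semi_fractional_def)
    qed
    define Box :: "(nat \<Rightarrow> real) set" where "Box = PiE UNIV (\<lambda>j. {0..Bd j})"
    have cBox: "compact Box"
    proof -
      have "compactin (product_topology (\<lambda>_. euclidean) UNIV) Box"
        unfolding Box_def compactin_PiE by (simp add: compactin_euclidean_iff)
      then show ?thesis by (simp add: euclidean_product_topology compactin_euclidean_iff)
    qed
    have TBox: "T n \<in> Box" for n unfolding Box_def using Tb by (simp add: PiE_UNIV_domain)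
    obtain l r where l: "l \<in> Box" "strict_mono r" "(T \<circ> r) \<longlonglongrightarrow> l"
      using compact_imp_seq_compact[OF cBox] TBox unfolding seq_compact_def by metis
    have pw: "(\<lambda>n. T (r n) i) \<longlonglongrightarrow> l i" for i
    proof -
      have "continuous_on UNIV (\<lambda>x::nat\<Rightarrow>real. x i)" by simp
      from continuous_on_tendsto_compose[OF this l(3)] show ?thesis by (simp add: o_def)
    qed
    have lsf: "semi_fractional l" using l(1) unfolding Box_def semi_fractional_def by auto
    have hl: "(\<Sum>j<K. (l j + c) * Rj p1 p2 l j) \<le> M0" for K
    proof (rule LIMSEQ_le)
      show "(\<lambda>n. \<Sum>j<K. (T (r n) j + c) * Rj p1 p2 (T (r n)) j) \<longlonglongrightarrow> (\<Sum>j<K. (l j + c) * Rj p1 p2 l j)"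
        by (intro tendsto_sum tendsto_mult tendsto_add pw tendsto_const
              Rj_tendsto[of p1 "\<lambda>n. T (r n)" l p2, OF assms(2) pw])
      show "(\<lambda>n. M0 + inverse (real (Suc n))) \<longlonglongrightarrow> M0" by (rule LIMSEQ_inverse_real_of_nat_add)
      show "\<exists>N. \<forall>n\<ge>N. (\<Sum>j<K. (T (r n) j + c) * Rj p1 p2 (T (r n)) j) \<le> M0 + inverse (real (Suc n))"
      proof (intro exI allI impI)
        fix n
        have "(\<Sum>j<K. (T (r n) j + c) * Rj p1 p2 (T (r n)) j) \<le> M0 + inverse (real (Suc (r n)))" by (rule part)
        also have "\<dots> \<le> M0 + inverse (real (Suc n))"
          using seq_suble[OF l(2), of n] by (simp add: le_imp_inverse_le)
        finally show "(\<Sum>j<K. (T (r n) j + c) * Rj p1 p2 (T (r n)) j) \<le> M0 + inverse (real (Suc n))" .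
      qed
    qed
    have nnl: "0 \<le> (l j + c) * Rj p1 p2 l j" for j using hnn lsf by blast
    have sml: "summable (\<lambda>j. (l j + c) * Rj p1 p2 l j)" by (rule summableI_nonneg_bounded[OF nnl hl])
    have "expected_time p1 p2 c l = (\<Sum>j. ennreal ((l j + c) * Rj p1 p2 l j))"
      by (rule expected_eq[OF assms(1,2) p2 assms(5) lsf])
    also have "\<dots> = ennreal (\<Sum>j. (l j + c) * Rj p1 p2 l j)" by (rule suminf_ennreal2[OF nnl sml])
    also have "\<dots> \<le> ennreal M0" using suminf_le_const[OF sml hl] by (rule ennreal_leI)
    finally have "expected_time p1 p2 c l \<le> m" unfolding mM0 .
    then show ?thesis using lsf mle order_trans by blast
  qed
qed

end
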